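(* Let $(A,\Delta)$ be an algebraic quantum hypergroup with faithful left integral $\varphi$ and antipode $S$ relative to $\varphi$, and define $\psi=\varphi\circ S$. Then $\psi$ is a faithful right integral on $A$, and $$S((\psi\otimes\iota)((b\otimes1)\Delta(a)))=(\psi\otimes\iota)(\Delta(b)(a\otimes1))\qquad\text{for all }a,b\in A.$$
   Context: **Standing definitions.** All algebras are over $\mathbb C$, associative, possibly without identity, with non-degenerate product. $M(A)$ denotes the multiplier algebra and $\iota$ the identity map. *Comultiplication.* A regular comultiplication is a linear map $\Delta:A\to M(A\otimes A)$, not assumed multiplicative, such that: - $\Delta(a)(1\otimes b)$, $(a\otimes1)\Delta(b)$, $\Delta(a)(b\otimes1)$ and $(1\otimes a)\Delta(b)$ lie in $A\otimes A$; - $(a\otimes1\otimes1)(\Delta\otimes\iota)(\Delta(b)(1\otimes c))=(\iota\otimes\Delta)((a\otimes1)\Delta(b))(1\otimes1\otimes c)$. *Counit.* A counit is a homomorphism $\varepsilon$ with $(\varepsilon\otimes\iota)\Delta=\iota=(\iota\otimes\varepsilon)\Delta$. *Integrals.* A left integral is a nonzero $\varphi$ with $(\iota\otimes\varphi)\Delta(a)=\varphi(a)1$ in $M(A)$. A right integral is a nonzero $\psi$ with $(\psi\otimes\iota)\Delta(a)=\psi(a)1$. A functional is faithful if $f(ab)=0\ \forall b$ or $f(ba)=0\ \forall b$ forces $a=0$. *Antipode.* An antipode relative to a faithful left integral $\varphi$ is a bijective linear anti-homomorphism $S$ with $S((\iota\otimes\varphi)(\Delta(a)(1\otimes b)))=(\iota\otimes\varphi)((1\otimes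 a)\Delta(b))$. *Algebraic quantum hypergroup.* A pair $(A,\Delta)$ with a regular comultiplication admitting a counit, a faithful left integral $\varphi$ and an antipode $S$ relative to $\varphi$. *)

theory Defs
  imports Complex_Main
begin

text \<open>
  The algebra A is a type 'a of class ring (associative, distributive,
  no identity required) together with a complex scalar multiplication smul.
  Elements of A (x) A and A (x) A (x) A are represented by finite sums of
  elementary tensors (lists), with equality of tensors given by the relations
  teq2 / teq3 (two sums represent the same tensor iff all slices by linear
  functionals agree).  Multipliers of such an algebra are double centralizers
  (L, R) with x L(y) = R(x) y; m y = L y and x m = R x.
\<close>

type_synonym 'a t2 = "('a \<times> 'a) list"
type_synonym 'a t3 = "('a \<times> 'a \<times> 'a) list"
type_synonym 'r mult = "('r \<Rightarrow> 'r) \<times> ('r \<Rightarrow> 'r)"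

definition calg :: "(complex \<Rightarrow> 'a::ring \<Rightarrow> 'a) \<Rightarrow> bool" where
  "calg smul \<longleftrightarrow>
     (\<forall>c x y. smul c (x + y) = smul c x + smul c y) \<and>
     (\<forall>c d x. smul (c + d) x = smul c x + smul d x) \<and>
     (\<forall>c d x. smul c (smul d x) = smul (c * d) x) \<and>
     (\<forall>x. smul 1 x = x) \<and>
     (\<forall>c x y. smul c (x * y) = smul c x * y \<and> smul c (x * y) = x * smul c y) \<and>
     (\<forall>x::'a. (\<forall>y. x * y = 0) \<longrightarrow> x = 0) \<and>
     (\<forall>x::'a. (\<forall>y. y * x = 0) \<longrightarrow> x = 0)"

definition clin :: "(complex \<Rightarrow> 'a::ring \<Rightarrow> 'a) \<Rightarrow> ('a \<Rightarrow> complex) \<Rightarrow> bool" where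
  "clin smul f \<longleftrightarrow> (\<forall>x y. f (x + y) = f x + f y) \<and> (\<forall>c x. f (smul c x) = c * f x)"

definition lin_map :: "(complex \<Rightarrow> 'a::ring \<Rightarrow> 'a) \<Rightarrow> ('a \<Rightarrow> 'a) \<Rightarrow> bool" where
  "lin_map smul S \<longleftrightarrow> (\<forall>x y. S (x + y) = S x + S y) \<and> (\<forall>c x. S (smul c x) = smul c (S x))"

definition faithful :: "('a::ring \<Rightarrow> complex) \<Rightarrow> bool" where
  "faithful f \<longleftrightarrow> (\<forall>a. (\<forall>b. f (a * b) = 0) \<longrightarrow> a = 0) \<and> (\<forall>a. (\<forall>b. f (b * a) = 0) \<longrightarrow> a = 0)"

definition teq2 :: "(complex \<Rightarrow> 'a::ring \<Rightarrow> 'a) \<Rightarrow> 'a t2 \<Rightarrow> 'a t2 \<Rightarrow> bool" where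
  "teq2 smul xs ys \<longleftrightarrow> (\<forall>f. clin smul f \<longrightarrow>
     sum_list (map (\<lambda>(x, y). smul (f x) y) xs) = sum_list (map (\<lambda>(x, y). smul (f x) y) ys))"

definition teq3 :: "(complex \<Rightarrow> 'a::ring \<Rightarrow> 'a) \<Rightarrow> 'a t3 \<Rightarrow> 'a t3 \<Rightarrow> bool" where
  "teq3 smul xs ys \<longleftrightarrow> (\<forall>f g. clin smul f \<and> clin smul g \<longrightarrow>
     sum_list (map (\<lambda>(x, y, z). smul (f x * g y) z) xs) =
     sum_list (map (\<lambda>(x, y, z). smul (f x * g y) z) ys))"

definition tmul2 :: "'a::ring t2 \<Rightarrow> 'a t2 \<Rightarrow> 'a t2" where
  "tmul2 xs ys = concat (map (\<lambda>(x1, x2). map (\<lambda>(y1, y2). (x1 * y1, x2 * y2)) ys) xs)"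

definition tmul3 :: "'a::ring t3 \<Rightarrow> 'a t3 \<Rightarrow> 'a t3" where
  "tmul3 xs ys = concat (map (\<lambda>(x1, x2, x3). map (\<lambda>(y1, y2, y3). (x1 * y1, x2 * y2, x3 * y3)) ys) xs)"

definition is_mult :: "('r \<Rightarrow> 'r \<Rightarrow> bool) \<Rightarrow> ('r \<Rightarrow> 'r \<Rightarrow> 'r) \<Rightarrow> 'r mult \<Rightarrow> bool" where
  "is_mult eq mul m \<longleftrightarrow>
     (\<forall>x y. eq x y \<longrightarrow> eq (fst m x) (fst m y) \<and> eq (snd m x) (snd m y)) \<and>
     (\<forall>x y. eq (mul x (fst m y)) (mul (snd m x) y))"

definition meq :: "('r \<Rightarrow> 'r \<Rightarrow> bool) \<Rightarrow> 'r mult \<Rightarrow> 'r mult \<Rightarrow> bool" where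
  "meq eq m1 m2 \<longleftrightarrow> (\<forall>y. eq (fst m1 y) (fst m2 y)) \<and> (\<forall>x. eq (snd m1 x) (snd m2 x))"

definition memb :: "('r \<Rightarrow> 'r \<Rightarrow> 'r) \<Rightarrow> 'r \<Rightarrow> 'r mult" where
  "memb mul t = ((\<lambda>y. mul t y), (\<lambda>x. mul x t))"

definition mmul :: "'r mult \<Rightarrow> 'r mult \<Rightarrow> 'r mult" where
  "mmul m1 m2 = (fst m1 \<circ> fst m2, snd m2 \<circ> snd m1)"

definition inM :: "('r \<Rightarrow> 'r \<Rightarrow> bool) \<Rightarrow> ('r \<Rightarrow> 'r \<Rightarrow> 'r) \<Rightarrow> 'r mult \<Rightarrow> 'r \<Rightarrow> bool" where
  "inM eq mul m t \<longleftrightarrow> meq eq m (memb mul t)"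

abbreviation inAA :: "(complex \<Rightarrow> 'a::ring \<Rightarrow> 'a) \<Rightarrow> 'a t2 mult \<Rightarrow> 'a t2 \<Rightarrow> bool" where
  "inAA smul m t \<equiv> inM (teq2 smul) tmul2 m t"

definition madd :: "('b list) mult \<Rightarrow> ('b list) mult \<Rightarrow> ('b list) mult" where
  "madd m1 m2 = ((\<lambda>y. fst m1 y @ fst m2 y), (\<lambda>x. snd m1 x @ snd m2 x))"

definition msc2 :: "(complex \<Rightarrow> 'a::ring \<Rightarrow> 'a) \<Rightarrow> complex \<Rightarrow> 'a t2 mult \<Rightarrow> 'a t2 mult" where
  "msc2 smul c m = ((\<lambda>y. map (\<lambda>(u, v). (smul c u, v)) (fst m y)),
                    (\<lambda>x. map (\<lambda>(u, v). (smul c u, v)) (snd m x)))"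

text \<open>a (x) 1 and 1 (x) a in M(A (x) A); a (x) 1 (x) 1 and 1 (x) 1 (x) a in M(A (x) A (x) A)\<close>
definition lone :: "'a::ring \<Rightarrow> 'a t2 mult" where
  "lone a = (map (\<lambda>(x, y). (a * x, y)), map (\<lambda>(x, y). (x * a, y)))"
definition rone :: "'a::ring \<Rightarrow> 'a t2 mult" where
  "rone a = (map (\<lambda>(x, y). (x, a * y)), map (\<lambda>(x, y). (x, y * a)))"
definition lone3 :: "'a::ring \<Rightarrow> 'a t3 mult" where
  "lone3 a = (map (\<lambda>(x, y, z). (a * x, y, z)), map (\<lambda>(x, y, z). (x * a, y, z)))"
definition rone3 :: "'a::ring \<Rightarrow> 'a t3 mult" where
  "rone3 a = (map (\<lambda>(x, y, z). (x, y, a * z)), map (\<lambda>(x, y, z). (x, y, z * a)))"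

text \<open>(Delta (x) iota)(t) and (iota (x) Delta)(t) in M(A (x) A (x) A), for t in A (x) A\<close>
definition delta_id :: "('a::ring \<Rightarrow> 'a t2 mult) \<Rightarrow> 'a t2 \<Rightarrow> 'a t3 mult" where
  "delta_id Delta t =
    ((\<lambda>w. concat (map (\<lambda>(p, q). concat (map (\<lambda>(x, y, z).
          map (\<lambda>(u, v). (u, v, q * z)) (fst (Delta p) [(x, y)])) w)) t)),
     (\<lambda>w. concat (map (\<lambda>(p, q). concat (map (\<lambda>(x, y, z).
          map (\<lambda>(u, v). (u, v, z * q)) (snd (Delta p) [(x, y)])) w)) t)))"

definition id_delta :: "('a::ring \<Rightarrow> 'a t2 mult) \<Rightarrow> 'a t2 \<Rightarrow> 'a t3 mult" where
  "id_delta Delta t =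
    ((\<lambda>w. concat (map (\<lambda>(r, s). concat (map (\<lambda>(x, y, z).
          map (\<lambda>(u, v). (r * x, u, v)) (fst (Delta s) [(y, z)])) w)) t)),
     (\<lambda>w. concat (map (\<lambda>(r, s). concat (map (\<lambda>(x, y, z).
          map (\<lambda>(u, v). (x * r, u, v)) (snd (Delta s) [(y, z)])) w)) t)))"

text \<open>slice maps: (iota (x) f) and (f (x) iota)\<close>
definition slice2 :: "(complex \<Rightarrow> 'a::ring \<Rightarrow> 'a) \<Rightarrow> ('a \<Rightarrow> complex) \<Rightarrow> 'a t2 \<Rightarrow> 'a" where
  "slice2 smul f t = sum_list (map (\<lambda>(x, y). smul (f y) x) t)"
definition slice1 :: "(complex \<Rightarrow> 'a::ring \<Rightarrow> 'a) \<Rightarrow> ('a \<Rightarrow> complex) \<Rightarrow> 'a t2 \<Rightarrow> 'a" where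
  "slice1 smul f t = sum_list (map (\<lambda>(x, y). smul (f x) y) t)"

definition regular_comult :: "(complex \<Rightarrow> 'a::ring \<Rightarrow> 'a) \<Rightarrow> ('a \<Rightarrow> 'a t2 mult) \<Rightarrow> bool" where
  "regular_comult smul Delta \<longleftrightarrow>
     (\<forall>a. is_mult (teq2 smul) tmul2 (Delta a)) \<and>
     (\<forall>a b. meq (teq2 smul) (Delta (a + b)) (madd (Delta a) (Delta b))) \<and>
     (\<forall>c a. meq (teq2 smul) (Delta (smul c a)) (msc2 smul c (Delta a))) \<and>
     (\<forall>a b. \<exists>t. inAA smul (mmul (Delta a) (rone b)) t) \<and>
     (\<forall>a b. \<exists>t. inAA smul (mmul (lone a) (Delta b)) t) \<and>
     (\<forall>a b. \<exists>t. inAA smul (mmul (Delta a) (lone b)) t) \<and>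
     (\<forall>a b. \<exists>t. inAA smul (mmul (rone a) (Delta b)) t) \<and>
     (\<forall>a b c t1 t2. inAA smul (mmul (Delta b) (rone c)) t1 \<and> inAA smul (mmul (lone a) (Delta b)) t2 \<longrightarrow>
        meq (teq3 smul) (mmul (lone3 a) (delta_id Delta t1)) (mmul (id_delta Delta t2) (rone3 c)))"

definition counit :: "(complex \<Rightarrow> 'a::ring \<Rightarrow> 'a) \<Rightarrow> ('a \<Rightarrow> 'a t2 mult) \<Rightarrow> ('a \<Rightarrow> complex) \<Rightarrow> bool" where
  "counit smul Delta eps \<longleftrightarrow> clin smul eps \<and> (\<forall>x y. eps (x * y) = eps x * eps y) \<and>
     (\<forall>a b t. inAA smul (mmul (Delta a) (rone b)) t \<longrightarrow> slice1 smul eps t = a * b) \<and>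
     (\<forall>a b t. inAA smul (mmul (rone b) (Delta a)) t \<longrightarrow> slice1 smul eps t = b * a) \<and>
     (\<forall>a b t. inAA smul (mmul (Delta a) (lone b)) t \<longrightarrow> slice2 smul eps t = a * b) \<and>
     (\<forall>a b t. inAA smul (mmul (lone b) (Delta a)) t \<longrightarrow> slice2 smul eps t = b * a)"

definition left_integral :: "(complex \<Rightarrow> 'a::ring \<Rightarrow> 'a) \<Rightarrow> ('a \<Rightarrow> 'a t2 mult) \<Rightarrow> ('a \<Rightarrow> complex) \<Rightarrow> bool" where
  "left_integral smul Delta phi \<longleftrightarrow> clin smul phi \<and> phi \<noteq> (\<lambda>_. 0) \<and>
     (\<forall>a c t. inAA smul (mmul (Delta a) (lone c)) t \<longrightarrow> slice2 smul phi t = smul (phi a) c) \<and>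
     (\<forall>a c t. inAA smul (mmul (lone c) (Delta a)) t \<longrightarrow> slice2 smul phi t = smul (phi a) c)"

definition right_integral :: "(complex \<Rightarrow> 'a::ring \<Rightarrow> 'a) \<Rightarrow> ('a \<Rightarrow> 'a t2 mult) \<Rightarrow> ('a \<Rightarrow> complex) \<Rightarrow> bool" where
  "right_integral smul Delta psi \<longleftrightarrow> clin smul psi \<and> psi \<noteq> (\<lambda>_. 0) \<and>
     (\<forall>a c t. inAA smul (mmul (Delta a) (rone c)) t \<longrightarrow> slice1 smul psi t = smul (psi a) c) \<and>
     (\<forall>a c t. inAA smul (mmul (rone c) (Delta a)) t \<longrightarrow> slice1 smul psi t = smul (psi a) c)"

definition antipode :: "(complex \<Rightarrow> 'a::ring \<Rightarrow> 'a) \<Rightarrow> ('a \<Rightarrow> 'a t2 mult) \<Rightarrow> ('a \<Rightarrow> complex) \<Rightarrow> ('a \<Rightarrow> 'a) \<Rightarrow> bool" where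
  "antipode smul Delta phi S \<longleftrightarrow> lin_map smul S \<and> bij S \<and> (\<forall>x y. S (x * y) = S y * S x) \<and>
     (\<forall>a b t u. inAA smul (mmul (Delta a) (rone b)) t \<and> inAA smul (mmul (rone a) (Delta b)) u \<longrightarrow>
        S (slice2 smul phi t) = slice2 smul phi u)"

definition alg_quantum_hypergroup ::
  "(complex \<Rightarrow> 'a::ring \<Rightarrow> 'a) \<Rightarrow> ('a \<Rightarrow> 'a t2 mult) \<Rightarrow> ('a \<Rightarrow> complex) \<Rightarrow> ('a \<Rightarrow> 'a) \<Rightarrow> bool" where
  "alg_quantum_hypergroup smul Delta phi S \<longleftrightarrow>
     calg smul \<and> regular_comult smul Delta \<and> (\<exists>eps. counit smul Delta eps) \<and>
     left_integral smul Delta phi \<and> faithful phi \<and> antipode smul Delta phi S"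

end

theory Submission imports Defs begin

definition psum :: "('a \<times> 'a) list \<Rightarrow> ('a \<Rightarrow> complex) \<Rightarrow> ('a \<Rightarrow> complex) \<Rightarrow> complex" where
  "psum t f g = sum_list (map (\<lambda>(x, y). f x * g y) t)"

lemma psum_simps[simp]: "psum [] f g = 0" "psum ((x,y)#t) f g = f x * g y + psum t f g"
  "psum (t @ u) f g = psum t f g + psum u f g"
  by (auto simp: psum_def)

lemma psum_map[simp]: "psum (map (\<lambda>(x,y). (h x, k y)) t) f g = psum t (f \<circ> h) (g \<circ> k)"
  by (induction t) (auto simp: psum_def)

locale aqh =
  fixes smul :: "complex \<Rightarrow> 'a::ring \<Rightarrow> 'a" and Delta :: "'a \<Rightarrow> 'a t2 mult"
    and phi :: "'a \<Rightarrow> complex" and S :: "'a \<Rightarrow> 'a" and eps :: "'a \<Rightarrow> complex"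
  assumes calg: "calg smul" and rc: "regular_comult smul Delta" and cu: "counit smul Delta eps"
    and li: "left_integral smul Delta phi" and fa: "faithful phi" and ap: "antipode smul Delta phi S"
begin

lemma smul_add: "smul c (x + y) = smul c x + smul c y" using calg by (simp add: calg_def)
lemma smul_add2: "smul (c + d) x = smul c x + smul d x" using calg by (simp add: calg_def)
lemma smul_smul: "smul c (smul d x) = smul (c * d) x" using calg by (simp add: calg_def)
lemma smul_one[simp]: "smul 1 x = x" using calg by (simp add: calg_def)
lemma smul_mult1: "smul c (x * y) = smul c x * y" using calg unfolding calg_def by blast
lemma smul_mult2: "smul c (x * y) = x * smul c y" using calg unfolding calg_def by blast
lemma nd_r': "\<forall>x::'a. (\<forall>y. x * y = 0) \<longrightarrow> x = 0" using calg unfolding calg_def by (elim conjE) assumption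
lemma nd_l': "\<forall>x::'a. (\<forall>y. y * x = 0) \<longrightarrow> x = 0" using calg unfolding calg_def by (elim conjE) assumption
lemma nd_r: "(\<And>y. (x::'a) * y = 0) \<Longrightarrow> x = 0" using nd_r' by blast
lemma nd_l: "(\<And>y. y * (x::'a) = 0) \<Longrightarrow> x = 0" using nd_l' by blast

lemma smul_zero[simp]: "smul c 0 = 0"
  using smul_add[of c 0 0] by simp
lemma smul_zero2[simp]: "smul 0 x = 0"
  using smul_add2[of 0 0 x] by simp
lemma smul_minus: "smul c (- x) = - smul c x"
proof -
  have "smul c x + smul c (- x) = 0" using smul_add[of c x "-x"] by simp
  then show ?thesis by (simp add: eq_neg_iff_add_eq_0 add.commute)
qed
lemma smul_diff: "smul c (x - y) = smul c x - smul c y"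
  using smul_add[of c x "-y"] smul_minus by simp

end

context aqh begin
lemma clin_add: "clin smul f \<Longrightarrow> f (x + y) = f x + f y" by (simp add: clin_def)
lemma clin_smul: "clin smul f \<Longrightarrow> f (smul c x) = c * f x" by (simp add: clin_def)
lemma clin_zero: "clin smul f \<Longrightarrow> f 0 = 0"
  using clin_add[of f 0 0] by simp
lemma clin_minus: assumes "clin smul f" shows "f (- x) = - f x"
proof -
  have "f x + f (- x) = 0" using clin_add[OF assms, of x "-x"] clin_zero[OF assms] by simp
  then show ?thesis by (simp add: eq_neg_iff_add_eq_0 add.commute)
qed
lemma clin_diff: "clin smul f \<Longrightarrow> f (x - y) = f x - f y"
  using clin_add[of f x "-y"] clin_minus by simp
lemma clin_sum: "clin smul f \<Longrightarrow> f (sum_list xs) = sum_list (map f xs)"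
  by (induction xs) (auto simp: clin_zero clin_add)

lemma clin_slice1: "clin smul g \<Longrightarrow> g (slice1 smul f t) = psum t f g"
  by (induction t) (auto simp: slice1_def clin_zero clin_add clin_smul)
lemma clin_slice2: "clin smul f \<Longrightarrow> f (slice2 smul g t) = psum t f g"
  by (induction t) (auto simp: slice2_def clin_zero clin_add clin_smul mult.commute)

lemma clin_lmul: "clin smul f \<Longrightarrow> clin smul (\<lambda>x. f (g * x))"
  by (auto simp: clin_def distrib_left smul_mult2[symmetric])
lemma clin_rmul: "clin smul f \<Longrightarrow> clin smul (\<lambda>x. f (x * g))"
  by (auto simp: clin_def distrib_right smul_mult1[symmetric])

end

context aqh begin

lemma clin_phi: "clin smul phi" using li by (simp add: left_integral_def)
lemma phi_nz: "phi \<noteq> (\<lambda>_. 0)" using li by (simp add: left_integral_def)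

lemma sep_l: assumes "\<And>k. phi (k * P) = phi (k * Q)" shows "P = (Q::'a)"
proof -
  have "\<forall>b. phi (b * (P - Q)) = 0"
    using assms by (simp add: right_diff_distrib clin_diff[OF clin_phi])
  then have "P - Q = 0" using fa unfolding faithful_def by blast
  then show ?thesis by simp
qed

lemma sep_r: assumes "\<And>k. phi (P * k) = phi (Q * k)" shows "P = (Q::'a)"
proof -
  have "\<forall>b. phi ((P - Q) * b) = 0"
    using assms by (simp add: left_diff_distrib clin_diff[OF clin_phi])
  then have "P - Q = 0" using fa unfolding faithful_def by blast
  then show ?thesis by simp
qed

lemma ext_clin: assumes "\<And>h. clin smul h \<Longrightarrow> h P = h Q" shows "P = (Q::'a)"
  by (rule sep_l) (rule assms[OF clin_lmul[OF clin_phi]])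

lemma eq_rmul: assumes "\<And>w. P * w = Q * w" shows "P = (Q::'a)"
proof -
  have "\<forall>w. (P - Q) * w = 0" using assms by (simp add: left_diff_distrib)
  then show ?thesis using nd_r[of "P - Q"] by simp
qed

lemma eq_lmul: assumes "\<And>w. w * P = w * Q" shows "P = (Q::'a)"
proof -
  have "\<forall>w. w * (P - Q) = 0" using assms by (simp add: right_diff_distrib)
  then show ?thesis using nd_l[of "P - Q"] by simp
qed

lemma ext_clin_r: assumes "\<And>h w. clin smul h \<Longrightarrow> h (P * w) = h (Q * w)" shows "P = (Q::'a)"
  by (rule eq_rmul, rule ext_clin, rule assms)
lemma ext_clin_l: assumes "\<And>h w. clin smul h \<Longrightarrow> h (w * P) = h (w * Q)" shows "P = (Q::'a)"
  by (rule eq_lmul, rule ext_clin, rule assms)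

definition peq :: "'a t2 \<Rightarrow> 'a t2 \<Rightarrow> bool" where
  "peq X Y \<longleftrightarrow> (\<forall>f g. clin smul f \<longrightarrow> clin smul g \<longrightarrow> psum X f g = psum Y f g)"

lemma peqD: "peq X Y \<Longrightarrow> clin smul f \<Longrightarrow> clin smul g \<Longrightarrow> psum X f g = psum Y f g"
  by (simp add: peq_def)

lemma teq2_peq: assumes "teq2 smul X Y" shows "peq X Y"
  unfolding peq_def
proof (intro allI impI)
  fix f g assume f: "clin smul f" and g: "clin smul g"
  have "slice1 smul f X = slice1 smul f Y" using assms f unfolding teq2_def slice1_def by blast
  then show "psum X f g = psum Y f g" by (simp add: clin_slice1[OF g, symmetric])
qed

lemma peq_teq2: "peq X Y \<Longrightarrow> teq2 smul X Y"
  unfolding teq2_def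
proof (intro allI impI)
  fix f assume "peq X Y" "clin smul f"
  show "sum_list (map (\<lambda>(x, y). smul (f x) y) X) = sum_list (map (\<lambda>(x, y). smul (f x) y) Y)"
  proof (rule ext_clin)
    fix h assume "clin smul h"
    then show "h (\<Sum>(x, y)\<leftarrow>X. smul (f x) y) = h (\<Sum>(x, y)\<leftarrow>Y. smul (f x) y)"
      using \<open>peq X Y\<close> \<open>clin smul f\<close> by (simp add: clin_slice1[unfolded slice1_def] peq_def)
  qed
qed

lemma peq_refl[simp]: "peq X X" by (simp add: peq_def)
lemma peq_sym: "peq X Y \<Longrightarrow> peq Y X" by (simp add: peq_def)
lemma peq_trans: "peq X Y \<Longrightarrow> peq Y Z \<Longrightarrow> peq X Z" by (simp add: peq_def)

lemma psum_slice1: "clin smul g \<Longrightarrow> psum t f g = g (slice1 smul f t)" by (simp add: clin_slice1)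
lemma psum_slice2: "clin smul f \<Longrightarrow> psum t f g = f (slice2 smul g t)" by (simp add: clin_slice2)

lemma cov1r: assumes "clin smul f" "clin smul g"
  and "\<And>f w. clin smul f \<Longrightarrow> psum X (\<lambda>x. f (x * w)) g = psum Y (\<lambda>x. f (x * w)) g"
  shows "psum X f g = psum Y f g"
proof -
  have "slice2 smul g X = slice2 smul g Y"
  proof (rule ext_clin_r)
    fix h w assume h: "clin smul h"
    show "h (slice2 smul g X * w) = h (slice2 smul g Y * w)"
      using assms(3)[OF h, of w] clin_slice2[OF clin_rmul[OF h, of w], of g] by simp
  qed
  then show ?thesis using psum_slice2[OF assms(1)] by simp
qed

lemma cov2r: assumes "clin smul f" "clin smul g"
  and "\<And>g w. clin smul g \<Longrightarrow> psum X f (\<lambda>x. g (x * w)) = psum Y f (\<lambda>x. g (x * w))"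
  shows "psum X f g = psum Y f g"
proof -
  have "slice1 smul f X = slice1 smul f Y"
  proof (rule ext_clin_r)
    fix h w assume h: "clin smul h"
    show "h (slice1 smul f X * w) = h (slice1 smul f Y * w)"
      using assms(3)[OF h, of w] clin_slice1[OF clin_rmul[OF h, of w], of f] by simp
  qed
  then show ?thesis using psum_slice1[OF assms(2)] by simp
qed

lemma pcov: assumes "\<And>f g w1 w2. clin smul f \<Longrightarrow> clin smul g \<Longrightarrow>
     psum X (\<lambda>x. f (x * w1)) (\<lambda>y. g (y * w2)) = psum Y (\<lambda>x. f (x * w1)) (\<lambda>y. g (y * w2))"
  shows "peq X Y"
  unfolding peq_def
proof (intro allI impI)
  fix f g assume f: "clin smul f" and g: "clin smul g"
  show "psum X f g = psum Y f g"
  proof (rule cov1r[OF f g])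
    fix f' w1 assume f': "clin smul f'"
    show "psum X (\<lambda>x. f' (x * w1)) g = psum Y (\<lambda>x. f' (x * w1)) g"
      by (rule cov2r[OF clin_rmul[OF f'] g]) (rule assms[OF f'])
  qed
qed

end

definition rmul :: "'a::ring \<Rightarrow> 'a \<Rightarrow> 'a t2 \<Rightarrow> 'a t2" where
  "rmul w1 w2 t = map (\<lambda>(x, y). (x * w1, y * w2)) t"
definition lm :: "'a::ring \<Rightarrow> 'a t2 \<Rightarrow> 'a t2" where
  "lm g t = map (\<lambda>(x, y). (g * x, y)) t"
definition lm2 :: "'a::ring \<Rightarrow> 'a t2 \<Rightarrow> 'a t2" where
  "lm2 g t = map (\<lambda>(x, y). (x, g * y)) t"
definition rm1 :: "'a::ring \<Rightarrow> 'a t2 \<Rightarrow> 'a t2" where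
  "rm1 g t = map (\<lambda>(x, y). (x * g, y)) t"
definition rm2 :: "'a::ring \<Rightarrow> 'a t2 \<Rightarrow> 'a t2" where
  "rm2 g t = map (\<lambda>(x, y). (x, y * g)) t"

lemma psum_rmul[simp]: "psum (rmul w1 w2 t) f g = psum t (\<lambda>x. f (x * w1)) (\<lambda>y. g (y * w2))"
  by (induction t) (auto simp: rmul_def)
lemma psum_lm[simp]: "psum (lm w t) f g = psum t (\<lambda>x. f (w * x)) g"
  by (induction t) (auto simp: lm_def)
lemma psum_lm2[simp]: "psum (lm2 w t) f g = psum t f (\<lambda>y. g (w * y))"
  by (induction t) (auto simp: lm2_def)
lemma psum_rm1[simp]: "psum (rm1 w t) f g = psum t (\<lambda>x. f (x * w)) g"
  by (induction t) (auto simp: rm1_def)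
lemma psum_rm2[simp]: "psum (rm2 w t) f g = psum t f (\<lambda>y. g (y * w))"
  by (induction t) (auto simp: rm2_def)
lemma tmul2_single[simp]: "tmul2 t [(w1, w2)] = rmul w1 w2 t"
  by (induction t) (auto simp: tmul2_def rmul_def)

lemma psum_add1: "psum t (\<lambda>x. f x + f' x) g = psum t f g + psum t f' g"
  by (induction t) (auto simp: algebra_simps)
lemma psum_add2: "psum t f (\<lambda>x. g x + g' x) = psum t f g + psum t f g'"
  by (induction t) (auto simp: algebra_simps)
lemma psum_cmult1: "psum t (\<lambda>x. c * f x) g = c * psum t f g"
  by (induction t) (auto simp: algebra_simps)
lemma psum_cmult2: "psum t f (\<lambda>x. c * g x) = c * psum t f g"
  by (induction t) (auto simp: algebra_simps)
lemma psum_zero1: "psum t (\<lambda>x. 0) g = 0"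
  by (induction t) auto

lemma inAA_fst: "inAA smul m t \<Longrightarrow> teq2 smul (fst m y) (tmul2 t y)"
  by (simp add: inM_def meq_def memb_def)

context aqh begin

definition D :: "'a \<Rightarrow> 'a \<Rightarrow> 'a \<Rightarrow> 'a t2" where "D a w1 w2 = fst (Delta a) [(w1, w2)]"

definition T1 :: "'a \<Rightarrow> 'a \<Rightarrow> 'a t2" where "T1 a b = (SOME t. inAA smul (mmul (Delta a) (rone b)) t)"
definition T2 :: "'a \<Rightarrow> 'a \<Rightarrow> 'a t2" where "T2 a b = (SOME t. inAA smul (mmul (lone a) (Delta b)) t)"
definition T3 :: "'a \<Rightarrow> 'a \<Rightarrow> 'a t2" where "T3 a b = (SOME t. inAA smul (mmul (Delta a) (lone b)) t)"
definition T4 :: "'a \<Rightarrow> 'a \<Rightarrow> 'a t2" where "T4 a b = (SOME t. inAA smul (mmul (rone a) (Delta b)) t)"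

lemma T1_in: "inAA smul (mmul (Delta a) (rone b)) (T1 a b)"
  unfolding T1_def by (rule someI_ex) (use rc in \<open>simp add: regular_comult_def\<close>)
lemma T2_in: "inAA smul (mmul (lone a) (Delta b)) (T2 a b)"
  unfolding T2_def by (rule someI_ex) (use rc in \<open>simp add: regular_comult_def\<close>)
lemma T3_in: "inAA smul (mmul (Delta a) (lone b)) (T3 a b)"
  unfolding T3_def by (rule someI_ex) (use rc in \<open>simp add: regular_comult_def\<close>)
lemma T4_in: "inAA smul (mmul (rone a) (Delta b)) (T4 a b)"
  unfolding T4_def by (rule someI_ex) (use rc in \<open>simp add: regular_comult_def\<close>)

lemma T1_r: "peq (rmul w1 w2 (T1 a b)) (D a w1 (b * w2))"
proof -
  have "teq2 smul (D a w1 (b * w2)) (rmul w1 w2 (T1 a b))"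
    using inAA_fst[OF T1_in[of a b], where y="[(w1, w2)]"] by (simp add: mmul_def rone_def D_def)
  then show ?thesis by (rule peq_sym[OF teq2_peq])
qed
lemma T2_r: "peq (rmul w1 w2 (T2 g a)) (lm g (D a w1 w2))"
proof -
  have "teq2 smul (lm g (D a w1 w2)) (rmul w1 w2 (T2 g a))"
    using inAA_fst[OF T2_in[of g a], where y="[(w1, w2)]"] by (simp add: mmul_def lone_def D_def lm_def)
  then show ?thesis by (rule peq_sym[OF teq2_peq])
qed
lemma T3_r: "peq (rmul w1 w2 (T3 a b)) (D a (b * w1) w2)"
proof -
  have "teq2 smul (D a (b * w1) w2) (rmul w1 w2 (T3 a b))"
    using inAA_fst[OF T3_in[of a b], where y="[(w1, w2)]"] by (simp add: mmul_def lone_def D_def)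
  then show ?thesis by (rule peq_sym[OF teq2_peq])
qed
lemma T4_r: "peq (rmul w1 w2 (T4 b a)) (lm2 b (D a w1 w2))"
proof -
  have "teq2 smul (lm2 b (D a w1 w2)) (rmul w1 w2 (T4 b a))"
    using inAA_fst[OF T4_in[of b a], where y="[(w1, w2)]"] by (simp add: mmul_def rone_def D_def lm2_def)
  then show ?thesis by (rule peq_sym[OF teq2_peq])
qed

lemma D_add: "clin smul f \<Longrightarrow> clin smul g \<Longrightarrow>
   psum (D (a + a') w1 w2) f g = psum (D a w1 w2) f g + psum (D a' w1 w2) f g"
proof -
  assume f: "clin smul f" and g: "clin smul g"
  have "meq (teq2 smul) (Delta (a + a')) (madd (Delta a) (Delta a'))"
    using rc by (simp add: regular_comult_def)
  then have "teq2 smul (D (a + a') w1 w2) (D a w1 w2 @ D a' w1 w2)"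
    by (simp add: meq_def madd_def D_def)
  from peqD[OF teq2_peq[OF this] f g] show ?thesis by simp
qed

lemma D_smul: "clin smul f \<Longrightarrow> clin smul g \<Longrightarrow>
   psum (D (smul c a) w1 w2) f g = c * psum (D a w1 w2) f g"
proof -
  assume f: "clin smul f" and g: "clin smul g"
  have "meq (teq2 smul) (Delta (smul c a)) (msc2 smul c (Delta a))"
    using rc by (simp add: regular_comult_def)
  then have "teq2 smul (D (smul c a) w1 w2) (map (\<lambda>(u, v). (smul c u, v)) (D a w1 w2))"
    by (simp add: meq_def msc2_def D_def)
  from peqD[OF teq2_peq[OF this] f g] show ?thesis
    by (simp add: o_def clin_smul[OF f] psum_cmult1)
qed

end

definition sm :: "(complex \<Rightarrow> 'a::ring \<Rightarrow> 'a) \<Rightarrow> complex \<Rightarrow> 'a t2 \<Rightarrow> 'a t2" where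
  "sm smul c t = map (\<lambda>(x, y). (smul c x, y)) t"

lemma rmul_append[simp]: "rmul w1 w2 (X @ Y) = rmul w1 w2 X @ rmul w1 w2 Y" by (simp add: rmul_def)
lemma rmul_rmul[simp]: "rmul w1 w2 (rmul v1 v2 X) = rmul (v1 * w1) (v2 * w2) X"
  by (induction X) (auto simp: rmul_def mult.assoc)
lemma rmul_lm[simp]: "rmul w1 w2 (lm g X) = lm g (rmul w1 w2 X)"
  by (induction X) (auto simp: rmul_def lm_def mult.assoc)
lemma rmul_lm2[simp]: "rmul w1 w2 (lm2 g X) = lm2 g (rmul w1 w2 X)"
  by (induction X) (auto simp: rmul_def lm2_def mult.assoc)
lemma rmul_rm1[simp]: "rmul w1 w2 (rm1 g X) = rmul (g * w1) w2 X"
  by (induction X) (auto simp: rmul_def rm1_def mult.assoc)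
lemma rmul_rm2[simp]: "rmul w1 w2 (rm2 g X) = rmul w1 (g * w2) X"
  by (induction X) (auto simp: rmul_def rm2_def mult.assoc)
lemma lm_lm2: "lm g (lm2 h X) = lm2 h (lm g X)"
  by (induction X) (auto simp: lm_def lm2_def)

context aqh begin

lemma rmul_sm[simp]: "rmul w1 w2 (sm smul c X) = sm smul c (rmul w1 w2 X)"
  by (induction X) (auto simp: rmul_def sm_def smul_mult1)

lemma psum_sm: "clin smul f \<Longrightarrow> psum (sm smul c t) f g = c * psum t f g"
  by (induction t) (auto simp: sm_def clin_smul algebra_simps)

lemma peq_lm: "peq X Y \<Longrightarrow> peq (lm g X) (lm g Y)"
  by (simp add: peq_def clin_lmul)
lemma peq_lm2: "peq X Y \<Longrightarrow> peq (lm2 g X) (lm2 g Y)"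
  by (simp add: peq_def clin_lmul)
lemma peq_rm1: "peq X Y \<Longrightarrow> peq (rm1 g X) (rm1 g Y)"
  by (simp add: peq_def clin_rmul)
lemma peq_rm2: "peq X Y \<Longrightarrow> peq (rm2 g X) (rm2 g Y)"
  by (simp add: peq_def clin_rmul)
lemma peq_rmul: "peq X Y \<Longrightarrow> peq (rmul w1 w2 X) (rmul w1 w2 Y)"
  by (simp add: peq_def clin_rmul)
lemma peq_sm: "peq X Y \<Longrightarrow> peq (sm smul c X) (sm smul c Y)"
  by (simp add: peq_def psum_sm)
lemma peq_append: "peq X Y \<Longrightarrow> peq X' Y' \<Longrightarrow> peq (X @ X') (Y @ Y')"
  by (simp add: peq_def)

lemma peq_via0: "peq X Z \<Longrightarrow> peq Y Z \<Longrightarrow> peq X Y"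
  by (simp add: peq_def)

lemma pcovr: assumes "\<And>w1 w2. peq (rmul w1 w2 X) (rmul w1 w2 Y)" shows "peq X Y"
proof (rule pcov)
  fix f g w1 w2 assume "clin smul f" "clin smul g"
  then show "psum X (\<lambda>x. f (x * w1)) (\<lambda>y. g (y * w2)) = psum Y (\<lambda>x. f (x * w1)) (\<lambda>y. g (y * w2))"
    using peqD[OF assms[of w1 w2]] by simp
qed

lemma D_add_peq: "peq (D (a + a') w1 w2) (D a w1 w2 @ D a' w1 w2)"
  by (simp add: peq_def D_add)
lemma D_smul_peq: "peq (D (smul c a) w1 w2) (sm smul c (D a w1 w2))"
  by (simp add: peq_def D_smul psum_sm)

lemma T1_add: "peq (T1 (a + a') b) (T1 a b @ T1 a' b)"
proof (rule pcovr)
  fix w1 w2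
  show "peq (rmul w1 w2 (T1 (a + a') b)) (rmul w1 w2 (T1 a b @ T1 a' b))"
    by (simp only: rmul_append)
      (rule peq_via0[OF peq_trans[OF T1_r D_add_peq] peq_append[OF T1_r T1_r]])
qed
lemma T1_smul: "peq (T1 (smul c a) b) (sm smul c (T1 a b))"
proof (rule pcovr)
  fix w1 w2
  show "peq (rmul w1 w2 (T1 (smul c a) b)) (rmul w1 w2 (sm smul c (T1 a b)))"
    by (simp only: rmul_sm)
      (rule peq_via0[OF peq_trans[OF T1_r D_smul_peq] peq_sm[OF T1_r]])
qed
lemma T2_add: "peq (T2 g (a + a')) (T2 g a @ T2 g a')"
proof (rule pcovr)
  fix w1 w2
  have "peq (lm g (D (a + a') w1 w2)) (lm g (D a w1 w2) @ lm g (D a' w1 w2))"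
    using peq_lm[OF D_add_peq] by (simp add: lm_def)
  then show "peq (rmul w1 w2 (T2 g (a + a'))) (rmul w1 w2 (T2 g a @ T2 g a'))"
    by (simp only: rmul_append)
      (rule peq_via0[OF peq_trans[OF T2_r \<open>peq _ _\<close>] peq_append[OF T2_r T2_r]])
qed
lemma T2_smul: "peq (T2 g (smul c a)) (sm smul c (T2 g a))"
proof (rule pcovr)
  fix w1 w2
  have e: "lm g (sm smul c X) = sm smul c (lm g X)" for X
    by (induction X) (auto simp: lm_def sm_def smul_mult2)
  have "peq (lm g (D (smul c a) w1 w2)) (sm smul c (lm g (D a w1 w2)))"
    using peq_lm[OF D_smul_peq[of c a w1 w2], of g] by (simp add: e)
  then show "peq (rmul w1 w2 (T2 g (smul c a))) (rmul w1 w2 (sm smul c (T2 g a)))"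
    by (simp only: rmul_sm)
      (rule peq_via0[OF peq_trans[OF T2_r \<open>peq _ _\<close>] peq_sm[OF T2_r]])
qed
lemma T4_add: "peq (T4 b (a + a')) (T4 b a @ T4 b a')"
proof (rule pcovr)
  fix w1 w2
  have "peq (lm2 b (D (a + a') w1 w2)) (lm2 b (D a w1 w2) @ lm2 b (D a' w1 w2))"
    using peq_lm2[OF D_add_peq] by (simp add: lm2_def)
  then show "peq (rmul w1 w2 (T4 b (a + a'))) (rmul w1 w2 (T4 b a @ T4 b a'))"
    by (simp only: rmul_append)
      (rule peq_via0[OF peq_trans[OF T4_r \<open>peq _ _\<close>] peq_append[OF T4_r T4_r]])
qed
lemma T4_smul: "peq (T4 b (smul c a)) (sm smul c (T4 b a))"
proof (rule pcovr)
  fix w1 w2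
  have e: "lm2 g (sm smul c X) = sm smul c (lm2 g X)" for X g
    by (induction X) (auto simp: lm2_def sm_def)
  have "peq (lm2 b (D (smul c a) w1 w2)) (sm smul c (lm2 b (D a w1 w2)))"
    using peq_lm2[OF D_smul_peq[of c a w1 w2], of b] by (simp add: e)
  then show "peq (rmul w1 w2 (T4 b (smul c a))) (rmul w1 w2 (sm smul c (T4 b a)))"
    by (simp only: rmul_sm)
      (rule peq_via0[OF peq_trans[OF T4_r \<open>peq _ _\<close>] peq_sm[OF T4_r]])
qed

end

context aqh begin

lemma T4_add1: "peq (T4 (s + s') b) (T4 s b @ T4 s' b)"
proof (rule pcovr)
  fix w1 w2
  have "peq (lm2 (s + s') (D b w1 w2)) (lm2 s (D b w1 w2) @ lm2 s' (D b w1 w2))"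
    by (simp add: peq_def distrib_right clin_add psum_add2)
  then show "peq (rmul w1 w2 (T4 (s + s') b)) (rmul w1 w2 (T4 s b @ T4 s' b))"
    by (simp only: rmul_append)
      (rule peq_via0[OF peq_trans[OF T4_r \<open>peq _ _\<close>] peq_append[OF T4_r T4_r]])
qed
lemma T4_smul1: "peq (T4 (smul c s) b) (sm smul c (T4 s b))"
proof (rule pcovr)
  fix w1 w2
  have e: "lm2 g (sm smul c X) = sm smul c (lm2 g X)" for X g
    by (induction X) (auto simp: lm2_def sm_def)
  have "peq (lm2 (smul c s) (D b w1 w2)) (sm smul c (lm2 s (D b w1 w2)))"
    by (simp add: peq_def psum_sm smul_mult1[symmetric] clin_smul psum_cmult2)
  then show "peq (rmul w1 w2 (T4 (smul c s) b)) (rmul w1 w2 (sm smul c (T4 s b)))"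
    by (simp only: rmul_sm)
      (rule peq_via0[OF peq_trans[OF T4_r \<open>peq _ _\<close>] peq_sm[OF T4_r]])
qed

lemma clin_of: assumes "\<And>a a'. F (a + a') = F a + F a'" "\<And>c a. F (smul c a) = c * F a"
  shows "clin smul F" using assms by (simp add: clin_def)

lemma clin_T1: "clin smul f \<Longrightarrow> clin smul g \<Longrightarrow> clin smul (\<lambda>a. psum (T1 a b) f g)"
  by (rule clin_of) (simp_all add: peqD[OF T1_add] peqD[OF T1_smul] psum_sm)
lemma clin_T2: "clin smul f \<Longrightarrow> clin smul g \<Longrightarrow> clin smul (\<lambda>a. psum (T2 k a) f g)"
  by (rule clin_of) (simp_all add: peqD[OF T2_add] peqD[OF T2_smul] psum_sm)
lemma clin_T4b: "clin smul f \<Longrightarrow> clin smul g \<Longrightarrow> clin smul (\<lambda>a. psum (T4 b a) f g)"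
  by (rule clin_of) (simp_all add: peqD[OF T4_add] peqD[OF T4_smul] psum_sm)
lemma clin_T4a: "clin smul f \<Longrightarrow> clin smul g \<Longrightarrow> clin smul (\<lambda>a. psum (T4 a b) f g)"
  by (rule clin_of) (simp_all add: peqD[OF T4_add1] peqD[OF T4_smul1] psum_sm)

lemma peq_via: "peq X Z \<Longrightarrow> peq Y Z \<Longrightarrow> peq X Y"
  by (simp add: peq_def)

lemma MA1: "peq (rm2 v (T2 g a)) (lm g (T1 a v))"
proof (rule pcovr)
  fix w1 w2
  have 1: "peq (rmul w1 w2 (rm2 v (T2 g a))) (lm g (D a w1 (v * w2)))"
    using T2_r[of w1 "v * w2" g a] by simp
  have 2: "peq (rmul w1 w2 (lm g (T1 a v))) (lm g (D a w1 (v * w2)))"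
    using peq_lm[OF T1_r[of w1 w2 a v], of g] by simp
  show "peq (rmul w1 w2 (rm2 v (T2 g a))) (rmul w1 w2 (lm g (T1 a v)))"
    by (rule peq_via[OF 1 2])
qed
lemma MA2: "peq (lm k (T4 x b)) (lm2 x (T2 k b))"
proof (rule pcovr)
  fix w1 w2
  have 1: "peq (rmul w1 w2 (lm k (T4 x b))) (lm2 x (lm k (D b w1 w2)))"
    using peq_lm[OF T4_r[of w1 w2 x b], of k] by (simp add: lm_lm2)
  have 2: "peq (rmul w1 w2 (lm2 x (T2 k b))) (lm2 x (lm k (D b w1 w2)))"
    using peq_lm2[OF T2_r[of w1 w2 k b], of x] by simp
  show "peq (rmul w1 w2 (lm k (T4 x b))) (rmul w1 w2 (lm2 x (T2 k b)))"
    by (rule peq_via[OF 1 2])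
qed
lemma MA3: "peq (lm k (T1 x y)) (rm2 y (T2 k x))"
proof (rule pcovr)
  fix w1 w2
  have 1: "peq (rmul w1 w2 (lm k (T1 x y))) (lm k (D x w1 (y * w2)))"
    using peq_lm[OF T1_r[of w1 w2 x y], of k] by simp
  have 2: "peq (rmul w1 w2 (rm2 y (T2 k x))) (lm k (D x w1 (y * w2)))"
    using T2_r[of w1 "y * w2" k x] by simp
  show "peq (rmul w1 w2 (lm k (T1 x y))) (rmul w1 w2 (rm2 y (T2 k x)))"
    by (rule peq_via[OF 1 2])
qed
lemma MA4: "peq (T1 a (b1 * b2)) (rm2 b2 (T1 a b1))"
proof (rule pcovr)
  fix w1 w2
  have 1: "peq (rmul w1 w2 (T1 a (b1 * b2))) (D a w1 (b1 * (b2 * w2)))"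
    using T1_r[of w1 w2 a "b1 * b2"] by (simp add: mult.assoc)
  have 2: "peq (rmul w1 w2 (rm2 b2 (T1 a b1))) (D a w1 (b1 * (b2 * w2)))"
    using T1_r[of w1 "b2 * w2" a b1] by simp
  show "peq (rmul w1 w2 (T1 a (b1 * b2))) (rmul w1 w2 (rm2 b2 (T1 a b1)))"
    by (rule peq_via[OF 1 2])
qed
lemma MA6: "peq (lm2 h (T1 c k)) (rm2 k (T4 h c))"
proof (rule pcovr)
  fix w1 w2
  have 1: "peq (rmul w1 w2 (lm2 h (T1 c k))) (lm2 h (D c w1 (k * w2)))"
    using peq_lm2[OF T1_r[of w1 w2 c k], of h] by simp
  have 2: "peq (rmul w1 w2 (rm2 k (T4 h c))) (lm2 h (D c w1 (k * w2)))"
    using T4_r[of w1 "k * w2" h c] by simp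
  show "peq (rmul w1 w2 (lm2 h (T1 c k))) (rmul w1 w2 (rm2 k (T4 h c)))"
    by (rule peq_via[OF 1 2])
qed
lemma MA7: "peq (lm2 h (T3 b a)) (rm1 a (T4 h b))"
proof (rule pcovr)
  fix w1 w2
  have 1: "peq (rmul w1 w2 (lm2 h (T3 b a))) (lm2 h (D b (a * w1) w2))"
    using peq_lm2[OF T3_r[of w1 w2 b a], of h] by simp
  have 2: "peq (rmul w1 w2 (rm1 a (T4 h b))) (lm2 h (D b (a * w1) w2))"
    using T4_r[of "a * w1" w2 h b] by simp
  show "peq (rmul w1 w2 (lm2 h (T3 b a))) (rmul w1 w2 (rm1 a (T4 h b)))"
    by (rule peq_via[OF 1 2])
qed
lemma MA9: "peq (lm g (T4 k c)) (lm2 k (T2 g c))"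
proof (rule pcovr)
  fix w1 w2
  have 1: "peq (rmul w1 w2 (lm g (T4 k c))) (lm2 k (lm g (D c w1 w2)))"
    using peq_lm[OF T4_r[of w1 w2 k c], of g] by (simp add: lm_lm2)
  have 2: "peq (rmul w1 w2 (lm2 k (T2 g c))) (lm2 k (lm g (D c w1 w2)))"
    using peq_lm2[OF T2_r[of w1 w2 g c], of k] by simp
  show "peq (rmul w1 w2 (lm g (T4 k c))) (rmul w1 w2 (lm2 k (T2 g c)))"
    by (rule peq_via[OF 1 2])
qed
lemma MA10: "peq (rm2 y (T3 x m)) (rm1 m (T1 x y))"
proof (rule pcovr)
  fix w1 w2
  have 1: "peq (rmul w1 w2 (rm2 y (T3 x m))) (D x (m * w1) (y * w2))"
    using T3_r[of w1 "y * w2" x m] by simp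
  have 2: "peq (rmul w1 w2 (rm1 m (T1 x y))) (D x (m * w1) (y * w2))"
    using T1_r[of "m * w1" w2 x y] by simp
  show "peq (rmul w1 w2 (rm2 y (T3 x m))) (rmul w1 w2 (rm1 m (T1 x y)))"
    by (rule peq_via[OF 1 2])
qed
lemma MA11: "peq (rm2 c (T4 a b)) (lm2 a (T1 b c))"
proof (rule pcovr)
  fix w1 w2
  have 1: "peq (rmul w1 w2 (rm2 c (T4 a b))) (lm2 a (D b w1 (c * w2)))"
    using T4_r[of w1 "c * w2" a b] by simp
  have 2: "peq (rmul w1 w2 (lm2 a (T1 b c))) (lm2 a (D b w1 (c * w2)))"
    using peq_lm2[OF T1_r[of w1 w2 b c], of a] by simp
  show "peq (rmul w1 w2 (rm2 c (T4 a b))) (rmul w1 w2 (lm2 a (T1 b c)))"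
    by (rule peq_via[OF 1 2])
qed

end

definition tsum :: "('a \<times> 'a \<times> 'a) list \<Rightarrow> ('a \<Rightarrow> complex) \<Rightarrow> ('a \<Rightarrow> complex) \<Rightarrow> ('a \<Rightarrow> complex) \<Rightarrow> complex" where
  "tsum L f1 f2 f3 = sum_list (map (\<lambda>(x, y, z). f1 x * f2 y * f3 z) L)"

lemma tsum_simps[simp]: "tsum [] f1 f2 f3 = 0" "tsum ((x, y, z) # L) f1 f2 f3 = f1 x * f2 y * f3 z + tsum L f1 f2 f3"
  "tsum (L @ M) f1 f2 f3 = tsum L f1 f2 f3 + tsum M f1 f2 f3"
  by (auto simp: tsum_def)

lemma tsum_lm1: "tsum (map (\<lambda>(x, yz). (g * x, yz)) L) f1 f2 f3 = tsum L (\<lambda>x. f1 (g * x)) f2 f3"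
  by (induction L) (auto simp: tsum_def)
lemma tsum_last: "tsum (map (\<lambda>(u, v). (u, v, c)) L) f1 f2 f3 = psum L f1 f2 * f3 c"
  by (induction L) (auto simp: algebra_simps)
lemma tsum_first: "tsum (map (Pair c) L) f1 f2 f3 = f1 c * psum L f2 f3"
  by (induction L) (auto simp: algebra_simps)

definition nestL :: "'a t2 \<Rightarrow> ('a \<Rightarrow> 'a t2) \<Rightarrow> 'a t3" where
  "nestL t F = concat (map (\<lambda>(p, q). map (\<lambda>(u, v). (u, v, q)) (F p)) t)"
definition nestR :: "'a t2 \<Rightarrow> ('a \<Rightarrow> 'a t2) \<Rightarrow> 'a t3" where
  "nestR t F = concat (map (\<lambda>(r, s). map (\<lambda>(u, v). (r, u, v)) (F s)) t)"

lemma tsum_nestL: "tsum (nestL t F) f1 f2 f3 = psum t (\<lambda>p. psum (F p) f1 f2) f3"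
  by (induction t) (auto simp: nestL_def tsum_last)
lemma tsum_nestR: "tsum (nestR t F) f1 f2 f3 = psum t f1 (\<lambda>s. psum (F s) f2 f3)"
  by (induction t) (auto simp: nestR_def tsum_first)

context aqh begin

lemma clin_tslice: "clin smul h \<Longrightarrow>
   h (sum_list (map (\<lambda>(x, y, z). smul (f1 x * f2 y) z) L)) = tsum L f1 f2 h"
  by (induction L) (auto simp: clin_zero clin_add clin_smul)

lemma coa_lhs: "tsum (fst (mmul (lone3 g) (delta_id Delta t)) [(x, y, z)]) f1 f2 f3
   = psum t (\<lambda>p. psum (lm g (D p x y)) f1 f2) (\<lambda>q. f3 (q * z))"
proof -
  have e: "fst (mmul (lone3 g) (delta_id Delta t)) [(x, y, z)] =
     map (\<lambda>(x, yz). (g * x, yz)) (concat (map (\<lambda>(p, q). map (\<lambda>(u, v). (u, v, q * z)) (D p x y)) t))"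
    by (simp add: mmul_def lone3_def delta_id_def D_def)
  have "tsum (concat (map (\<lambda>(p, q). map (\<lambda>(u, v). (u, v, q * z)) (D p x y)) t)) (\<lambda>x. f1 (g * x)) f2 f3
     = psum t (\<lambda>p. psum (lm g (D p x y)) f1 f2) (\<lambda>q. f3 (q * z))"
    by (induction t) (auto simp: tsum_last)
  then show ?thesis unfolding e tsum_lm1 .
qed

lemma coa_rhs: "tsum (fst (mmul (id_delta Delta t) (rone3 b)) [(x, y, z)]) f1 f2 f3
   = psum t (\<lambda>r. f1 (r * x)) (\<lambda>s. psum (D s y (b * z)) f2 f3)"
proof -
  have e: "fst (mmul (id_delta Delta t) (rone3 b)) [(x, y, z)] =
     concat (map (\<lambda>(r, s). map (Pair (r * x)) (D s y (b * z))) t)"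
    by (simp add: mmul_def rone3_def id_delta_def D_def)
  show ?thesis unfolding e by (induction t) (auto simp: tsum_first)
qed

end

definition rot :: "'a t3 \<Rightarrow> 'a t3" where "rot L = map (\<lambda>(x, y, z). (y, z, x)) L"
lemma tsum_rot: "tsum (rot L) f2 f3 f1 = tsum L f1 f2 f3"
  by (induction L) (auto simp: rot_def tsum_def algebra_simps)

context aqh begin

lemma tstep: assumes "clin smul f3"
  and "\<And>h z. clin smul h \<Longrightarrow> tsum L F1 F2 (\<lambda>v. h (v * z)) = tsum R F1 F2 (\<lambda>v. h (v * z))"
  shows "tsum L F1 F2 f3 = tsum R F1 F2 f3"
proof -
  let ?P = "\<lambda>L. sum_list (map (\<lambda>(x, y, z). smul (F1 x * F2 y) z) L)"
  have "?P L = ?P R"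
  proof (rule ext_clin_r)
    fix h w assume h: "clin smul h"
    show "h (?P L * w) = h (?P R * w)"
      using assms(2)[OF h, of w] clin_tslice[OF clin_rmul[OF h, of w], of F1 F2] by simp
  qed
  then show ?thesis using clin_tslice[OF assms(1), of F1 F2] by metis
qed

lemma tcov: assumes "clin smul f1" "clin smul f2" "clin smul f3"
  and H: "\<And>f1 f2 f3 x y z. clin smul f1 \<Longrightarrow> clin smul f2 \<Longrightarrow> clin smul f3 \<Longrightarrow>
     tsum L (\<lambda>u. f1 (u * x)) (\<lambda>u. f2 (u * y)) (\<lambda>u. f3 (u * z)) = tsum R (\<lambda>u. f1 (u * x)) (\<lambda>u. f2 (u * y)) (\<lambda>u. f3 (u * z))"
  shows "tsum L f1 f2 f3 = tsum R f1 f2 f3"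
proof -
  have A: "tsum L (\<lambda>u. h1 (u * x)) (\<lambda>u. h2 (u * y)) f3 = tsum R (\<lambda>u. h1 (u * x)) (\<lambda>u. h2 (u * y)) f3"
    if "clin smul h1" "clin smul h2" for h1 h2 x y
    by (rule tstep[OF assms(3)]) (rule H[OF that])
  have B: "tsum L (\<lambda>u. h1 (u * x)) f2 f3 = tsum R (\<lambda>u. h1 (u * x)) f2 f3"
    if "clin smul h1" for h1 x
  proof -
    have "tsum (rot (rot L)) f3 (\<lambda>u. h1 (u * x)) f2 = tsum (rot (rot R)) f3 (\<lambda>u. h1 (u * x)) f2"
      by (rule tstep[OF assms(2)]) (simp add: tsum_rot A[OF that])
    then show ?thesis by (simp add: tsum_rot)
  qed
  have "tsum (rot L) f2 f3 f1 = tsum (rot R) f2 f3 f1"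
    by (rule tstep[OF assms(1)]) (simp add: tsum_rot B)
  then show ?thesis by (simp add: tsum_rot)
qed

lemma coa_cov: assumes f: "clin smul f1" "clin smul f2" "clin smul f3"
  shows "psum (T1 a b) (\<lambda>p. psum (T2 g p) (\<lambda>u. f1 (u * x)) (\<lambda>v. f2 (v * y))) (\<lambda>q. f3 (q * z))
    = psum (T2 g a) (\<lambda>r. f1 (r * x)) (\<lambda>s. psum (T1 s b) (\<lambda>u. f2 (u * y)) (\<lambda>v. f3 (v * z)))"
proof -
  have "meq (teq3 smul) (mmul (lone3 g) (delta_id Delta (T1 a b))) (mmul (id_delta Delta (T2 g a)) (rone3 b))"
    using rc T1_in[of a b] T2_in[of g a] unfolding regular_comult_def by blast
  then have "teq3 smul (fst (mmul (lone3 g) (delta_id Delta (T1 a b))) [(x, y, z)])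
     (fst (mmul (id_delta Delta (T2 g a)) (rone3 b)) [(x, y, z)])"
    by (simp add: meq_def)
  then have "tsum (fst (mmul (lone3 g) (delta_id Delta (T1 a b))) [(x, y, z)]) f1 f2 f3 =
     tsum (fst (mmul (id_delta Delta (T2 g a)) (rone3 b)) [(x, y, z)]) f1 f2 f3"
    using f unfolding teq3_def by (simp add: clin_tslice[OF f(3), symmetric])
  then have 1: "psum (T1 a b) (\<lambda>p. psum (lm g (D p x y)) f1 f2) (\<lambda>q. f3 (q * z)) =
     psum (T2 g a) (\<lambda>r. f1 (r * x)) (\<lambda>s. psum (D s y (b * z)) f2 f3)"
    by (simp add: coa_lhs coa_rhs)
  have e1: "psum (lm g (D p x y)) f1 f2 = psum (T2 g p) (\<lambda>u. f1 (u * x)) (\<lambda>v. f2 (v * y))" for p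
    using peqD[OF T2_r[of x y g p] f(1,2)] by simp
  have e2: "psum (D s y (b * z)) f2 f3 = psum (T1 s b) (\<lambda>u. f2 (u * y)) (\<lambda>v. f3 (v * z))" for s
    using peqD[OF T1_r[of y z s b] f(2,3)] by simp
  from 1 show ?thesis by (simp only: e1 e2)
qed

end

context aqh begin

lemma coa3: assumes f: "clin smul f1" "clin smul f2" "clin smul f3"
  shows "psum (T1 a b) (\<lambda>p. psum (T2 g p) f1 f2) f3 = psum (T2 g a) f1 (\<lambda>s. psum (T1 s b) f2 f3)"
proof -
  have "tsum (nestL (T1 a b) (T2 g)) f1 f2 f3 = tsum (nestR (T2 g a) (\<lambda>s. T1 s b)) f1 f2 f3"
    by (rule tcov[OF f]) (simp add: tsum_nestL tsum_nestR coa_cov)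
  then show ?thesis by (simp add: tsum_nestL tsum_nestR)
qed

lemma coa4: assumes f: "clin smul f1" "clin smul f2" "clin smul f3"
  shows "psum (T4 a b) (\<lambda>x. psum (T2 k x) f1 f2) f3 = psum (T2 k b) f1 (\<lambda>v. psum (T4 a v) f2 f3)"
proof -
  have "tsum (nestL (T4 a b) (T2 k)) f1 f2 f3 = tsum (nestR (T2 k b) (T4 a)) f1 f2 f3"
  proof (rule tstep[OF f(3)])
    fix h z assume h: "clin smul h"
    have H: "clin smul (\<lambda>x. psum (T2 k x) f1 f2)" by (rule clin_T2[OF f(1,2)])
    have "psum (T4 a b) (\<lambda>x. psum (T2 k x) f1 f2) (\<lambda>v. h (v * z))
        = psum (rm2 z (T4 a b)) (\<lambda>x. psum (T2 k x) f1 f2) h" by simp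
    also have "\<dots> = psum (lm2 a (T1 b z)) (\<lambda>x. psum (T2 k x) f1 f2) h"
      by (rule peqD[OF MA11 H h])
    also have "\<dots> = psum (T1 b z) (\<lambda>x. psum (T2 k x) f1 f2) (\<lambda>q. h (a * q))" by simp
    also have "\<dots> = psum (T2 k b) f1 (\<lambda>s. psum (T1 s z) f2 (\<lambda>q. h (a * q)))"
      by (rule coa3[OF f(1,2) clin_lmul[OF h]])
    also have "\<dots> = psum (T2 k b) f1 (\<lambda>s. psum (T4 a s) f2 (\<lambda>v. h (v * z)))"
    proof -
      have "psum (T1 s z) f2 (\<lambda>q. h (a * q)) = psum (T4 a s) f2 (\<lambda>v. h (v * z))" for s
        using peqD[OF MA11[of z a s] f(2) h] by simp
      then show ?thesis by simp
    qed
    finally show "tsum (nestL (T4 a b) (T2 k)) f1 f2 (\<lambda>v. h (v * z)) =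
        tsum (nestR (T2 k b) (T4 a)) f1 f2 (\<lambda>v. h (v * z))"
      by (simp add: tsum_nestL tsum_nestR)
  qed
  then show ?thesis by (simp add: tsum_nestL tsum_nestR)
qed

lemma S_lin: "lin_map smul S" using ap by (simp add: antipode_def)
lemma S_add: "S (x + y) = S x + S y" using S_lin by (simp add: lin_map_def)
lemma S_smul: "S (smul c x) = smul c (S x)" using S_lin by (simp add: lin_map_def)
lemma S_mult: "S (x * y) = S y * S x" using ap by (simp add: antipode_def)
lemma S_bij: "bij S" using ap by (simp add: antipode_def)
lemma S_inj: "S x = S y \<Longrightarrow> x = y" using S_bij by (meson bij_def injD)
lemma S_surj: "\<exists>x. y = S x" using S_bij by (meson bij_def surjD)
lemma clin_S: "clin smul f \<Longrightarrow> clin smul (\<lambda>x. f (S x))"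
  by (simp add: clin_def S_add S_smul)

definition E :: "'a \<Rightarrow> 'a \<Rightarrow> 'a" where "E a b = slice2 smul phi (T1 a b)"
definition F :: "'a \<Rightarrow> 'a \<Rightarrow> 'a" where "F a b = slice2 smul phi (T4 a b)"

lemma SE: "S (E a b) = F a b"
  using ap T1_in[of a b] T4_in[of a b] unfolding antipode_def E_def F_def by blast

lemma counit_eps: "clin smul eps" "eps (x * y) = eps x * eps y"
  using cu by (auto simp: counit_def)
lemma eps_T2: "slice2 smul eps (T2 g a) = g * a"
  using cu T2_in[of g a] unfolding counit_def by blast
lemma eps_T1: "slice1 smul eps (T1 a b) = a * b"
  using cu T1_in[of a b] unfolding counit_def by blast

lemma eps_nz: "\<exists>b. eps b \<noteq> 0"
proof (rule ccontr)
  assume "\<not> (\<exists>b. eps b \<noteq> 0)"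
  then have z: "\<And>b. eps b = 0" by simp
  have "a * b = 0" for a b :: 'a
  proof -
    have "a * b = slice1 smul eps (T1 a b)" by (simp add: eps_T1)
    also have "\<dots> = 0"
    proof -
      have "slice1 smul eps t = 0" for t by (induction t) (auto simp: slice1_def z)
      then show ?thesis by simp
    qed
    finally show ?thesis .
  qed
  then have "\<And>x::'a. x = 0" using nd_r by blast
  then have "phi = (\<lambda>_. 0)" using clin_zero[OF clin_phi] by (metis)
  then show False using phi_nz by simp
qed

lemma slice2_eps_T1: "slice2 smul eps (T1 a b) = smul (eps b) a"
proof (rule eq_lmul, rule ext_clin)
  fix g and h :: "'a \<Rightarrow> complex" assume h: "clin smul h"
  have "h (g * slice2 smul eps (T1 a b)) = psum (T1 a b) (\<lambda>x. h (g * x)) eps"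
    using clin_slice2[OF clin_lmul[OF h, of g]] by simp
  also have "\<dots> = psum (lm g (T1 a b)) h eps" by simp
  also have "\<dots> = psum (rm2 b (T2 g a)) h eps"
    by (rule peqD[OF peq_sym[OF MA1] h counit_eps(1)])
  also have "\<dots> = psum (T2 g a) h (\<lambda>y. eps b * eps y)" by (simp add: counit_eps(2) mult.commute)
  also have "\<dots> = eps b * h (slice2 smul eps (T2 g a))"
    by (simp add: psum_cmult2 clin_slice2[OF h])
  also have "\<dots> = h (g * smul (eps b) a)" by (simp add: eps_T2 clin_smul[OF h] smul_mult2[symmetric])
  finally show "h (g * slice2 smul eps (T1 a b)) = h (g * smul (eps b) a)" .
qed

lemma span: assumes L: "clin smul Lam" and Z: "\<And>a b. Lam (E a b) = 0" shows "Lam x = 0"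
proof -
  have W: "slice1 smul Lam (T1 a b1) = 0" for a b1
  proof (rule sep_r)
    fix b2
    have "phi (slice1 smul Lam (T1 a b1) * b2) = psum (T1 a b1) Lam (\<lambda>y. phi (y * b2))"
      using clin_slice1[OF clin_rmul[OF clin_phi, of b2]] by simp
    also have "\<dots> = psum (rm2 b2 (T1 a b1)) Lam phi" by simp
    also have "\<dots> = psum (T1 a (b1 * b2)) Lam phi"
      by (rule peqD[OF peq_sym[OF MA4] L clin_phi])
    also have "\<dots> = Lam (E a (b1 * b2))" by (simp add: E_def clin_slice2[OF L])
    also have "\<dots> = 0" by (rule Z)
    finally show "phi (slice1 smul Lam (T1 a b1) * b2) = phi (0 * b2)"
      using clin_zero[OF clin_phi] by simp
  qed
  obtain b where b: "eps b \<noteq> 0" using eps_nz by blast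
  have "eps b * Lam x = Lam (slice2 smul eps (T1 x b))"
    by (simp add: slice2_eps_T1 clin_smul[OF L])
  also have "\<dots> = psum (T1 x b) Lam eps" by (simp add: clin_slice2[OF L])
  also have "\<dots> = eps (slice1 smul Lam (T1 x b))" by (simp add: clin_slice1[OF counit_eps(1)])
  also have "\<dots> = 0" by (simp add: W clin_zero[OF counit_eps(1)])
  finally show ?thesis using b by simp
qed

end

definition flipS :: "('a \<Rightarrow> 'a) \<Rightarrow> 'a t2 \<Rightarrow> 'a t2" where
  "flipS S t = map (\<lambda>(x, y). (S y, S x)) t"
lemma psum_flipS[simp]: "psum (flipS S t) f g = psum t (\<lambda>x. g (S x)) (\<lambda>y. f (S y))"
  by (induction t) (auto simp: flipS_def mult.commute)

context aqh begin

lemma peq_phi: assumes "\<And>k m. psum X (\<lambda>x. phi (k * x)) (\<lambda>y. phi (y * m)) = psum Y (\<lambda>x. phi (k * x)) (\<lambda>y. phi (y * m))"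
  shows "peq X Y"
  unfolding peq_def
proof (intro allI impI)
  fix f g assume f: "clin smul f" and g: "clin smul g"
  have 1: "slice2 smul (\<lambda>y. phi (y * m)) X = slice2 smul (\<lambda>y. phi (y * m)) Y" for m
  proof (rule sep_l)
    fix k
    show "phi (k * slice2 smul (\<lambda>y. phi (y * m)) X) = phi (k * slice2 smul (\<lambda>y. phi (y * m)) Y)"
      using assms[of k m] clin_slice2[OF clin_lmul[OF clin_phi, of k]] by simp
  qed
  have 2: "slice1 smul f X = slice1 smul f Y"
  proof (rule sep_r)
    fix m
    have "phi (slice1 smul f X * m) = f (slice2 smul (\<lambda>y. phi (y * m)) X)"
      using clin_slice1[OF clin_rmul[OF clin_phi, of m]] clin_slice2[OF f] by simp
    also have "\<dots> = f (slice2 smul (\<lambda>y. phi (y * m)) Y)" by (simp add: 1)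
    also have "\<dots> = phi (slice1 smul f Y * m)"
      using clin_slice1[OF clin_rmul[OF clin_phi, of m]] clin_slice2[OF f] by simp
    finally show "phi (slice1 smul f X * m) = phi (slice1 smul f Y * m)" .
  qed
  show "psum X f g = psum Y f g" using 2 by (simp add: clin_slice1[OF g, symmetric])
qed

lemma clin_phiS1: "clin smul (\<lambda>x. phi (S x * m))" by (rule clin_S[OF clin_rmul[OF clin_phi]])
lemma clin_phiS2: "clin smul (\<lambda>x. phi (k * S x))" by (rule clin_S[OF clin_lmul[OF clin_phi]])

lemma AC_chain:
  "psum (T2 g (E a b)) (\<lambda>x. phi (S x * m)) (\<lambda>y. phi (k * S y)) =
   psum (T1 (S (E a b)) (S g)) (\<lambda>x. phi (k * x)) (\<lambda>y. phi (y * m))"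
proof -
  let ?f1 = "\<lambda>x. phi (S x * m)" and ?f2 = "\<lambda>y. phi (k * S y)"
  let ?X = "slice1 smul ?f1 (T2 g a)"
  have cphik: "clin smul (\<lambda>x. phi (k * x))" by (rule clin_lmul[OF clin_phi])
  have "psum (T2 g (E a b)) ?f1 ?f2 = psum (T1 a b) (\<lambda>p. psum (T2 g p) ?f1 ?f2) phi"
    unfolding E_def by (rule clin_slice2[OF clin_T2[OF clin_phiS1 clin_phiS2]])
  also have "\<dots> = psum (T2 g a) ?f1 (\<lambda>s. psum (T1 s b) ?f2 phi)"
    by (rule coa3[OF clin_phiS1 clin_phiS2 clin_phi])
  also have "\<dots> = psum (T2 g a) ?f1 (\<lambda>s. psum (T4 s b) (\<lambda>x. phi (k * x)) phi)"
  proof -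
    have "psum (T1 s b) ?f2 phi = psum (T4 s b) (\<lambda>x. phi (k * x)) phi" for s
    proof -
      have "psum (T1 s b) ?f2 phi = phi (k * S (E s b))"
        unfolding E_def using clin_slice2[OF clin_phiS2, where g=phi and t="T1 s b"] by simp
      also have "\<dots> = phi (k * F s b)" by (simp add: SE)
      also have "\<dots> = psum (T4 s b) (\<lambda>x. phi (k * x)) phi"
        unfolding F_def by (rule clin_slice2[OF cphik])
      finally show ?thesis .
    qed
    then show ?thesis by simp
  qed
  also have "\<dots> = psum (T4 ?X b) (\<lambda>x. phi (k * x)) phi"
    by (rule clin_slice1[OF clin_T4a[OF cphik clin_phi], symmetric])
  also have "\<dots> = psum (lm k (T4 ?X b)) phi phi" by simp
  also have "\<dots> = psum (lm2 ?X (T2 k b)) phi phi" by (rule peqD[OF MA2 clin_phi clin_phi])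
  also have "\<dots> = psum (T2 k b) phi (\<lambda>v. phi (?X * v))" by simp
  also have "\<dots> = psum (T2 k b) phi (\<lambda>v. psum (T4 a v) (\<lambda>x. phi (x * (S g * m))) phi)"
  proof -
    have "phi (?X * v) = psum (T4 a v) (\<lambda>x. phi (x * (S g * m))) phi" for v
    proof -
      have "phi (?X * v) = psum (T2 g a) ?f1 (\<lambda>s. phi (s * v))"
        by (rule clin_slice1[OF clin_rmul[OF clin_phi]])
      also have "\<dots> = psum (rm2 v (T2 g a)) ?f1 phi" by simp
      also have "\<dots> = psum (lm g (T1 a v)) ?f1 phi" by (rule peqD[OF MA1 clin_phiS1 clin_phi])
      also have "\<dots> = psum (T1 a v) (\<lambda>p. ?f1 (g * p)) phi" by simp
      also have "\<dots> = ?f1 (g * E a v)"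
        unfolding E_def by (rule clin_slice2[OF clin_lmul[OF clin_phiS1], symmetric])
      also have "\<dots> = phi (F a v * (S g * m))" by (simp add: S_mult SE mult.assoc)
      also have "\<dots> = psum (T4 a v) (\<lambda>x. phi (x * (S g * m))) phi"
        unfolding F_def by (rule clin_slice2[OF clin_rmul[OF clin_phi]])
      finally show ?thesis .
    qed
    then show ?thesis by simp
  qed
  also have "\<dots> = psum (T4 a b) (\<lambda>x. psum (T2 k x) phi (\<lambda>q. phi (q * (S g * m)))) phi"
    by (rule coa4[OF clin_phi clin_rmul[OF clin_phi] clin_phi, symmetric])
  also have "\<dots> = psum (T4 a b) (\<lambda>x. psum (T1 x (S g)) (\<lambda>p. phi (k * p)) (\<lambda>q. phi (q * m))) phi"
  proof -
    have "psum (T2 k x) phi (\<lambda>q. phi (q * (S g * m))) = psum (T1 x (S g)) (\<lambda>p. phi (k * p)) (\<lambda>q. phi (q * m))" for x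
    proof -
      have "psum (T1 x (S g)) (\<lambda>p. phi (k * p)) (\<lambda>q. phi (q * m)) = psum (lm k (T1 x (S g))) phi (\<lambda>q. phi (q * m))"
        by simp
      also have "\<dots> = psum (rm2 (S g) (T2 k x)) phi (\<lambda>q. phi (q * m))"
        by (rule peqD[OF MA3 clin_phi clin_rmul[OF clin_phi]])
      also have "\<dots> = psum (T2 k x) phi (\<lambda>q. phi (q * (S g * m)))" by (simp add: mult.assoc)
      finally show ?thesis by simp
    qed
    then show ?thesis by simp
  qed
  also have "\<dots> = psum (T1 (F a b) (S g)) (\<lambda>x. phi (k * x)) (\<lambda>y. phi (y * m))"
    unfolding F_def by (rule clin_slice2[OF clin_T1[OF cphik clin_rmul[OF clin_phi]], symmetric])
  finally show ?thesis by (simp add: SE)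
qed

end

context aqh begin

lemma clin_minus_fun: "clin smul FF \<Longrightarrow> clin smul GG \<Longrightarrow> clin smul (\<lambda>x. FF x - GG x)"
  by (simp add: clin_def algebra_simps)

lemma AC: "peq (flipS S (T2 g c)) (T1 (S c) (S g))"
proof (rule peq_phi)
  fix k m
  let ?f1 = "\<lambda>x. phi (S x * m)" and ?f2 = "\<lambda>y. phi (k * S y)"
  let ?L = "\<lambda>c. psum (T2 g c) ?f1 ?f2 - psum (T1 (S c) (S g)) (\<lambda>x. phi (k * x)) (\<lambda>y. phi (y * m))"
  have cL: "clin smul ?L"
    by (rule clin_minus_fun[OF clin_T2[OF clin_phiS1 clin_phiS2]
          clin_S[OF clin_T1[OF clin_lmul[OF clin_phi] clin_rmul[OF clin_phi]]]])
  have "?L c = 0" by (rule span[OF cL]) (simp add: AC_chain)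
  then show "psum (flipS S (T2 g c)) (\<lambda>x. phi (k * x)) (\<lambda>y. phi (y * m)) =
      psum (T1 (S c) (S g)) (\<lambda>x. phi (k * x)) (\<lambda>y. phi (y * m))" by simp
qed

lemma peq_flipS: "peq X Y \<Longrightarrow> peq (flipS S X) (flipS S Y)"
  by (simp add: peq_def clin_S)

lemma flipS_lm: "flipS S (lm g X) = rm2 (S g) (flipS S X)"
  by (induction X) (auto simp: flipS_def lm_def rm2_def S_mult)
lemma flipS_lm2: "flipS S (lm2 g X) = rm1 (S g) (flipS S X)"
  by (induction X) (auto simp: flipS_def lm2_def rm1_def S_mult)

lemma peq_rm2_cancel: assumes "\<And>y. peq (rm2 y X) (rm2 y Y)" shows "peq X Y"
  unfolding peq_def
proof (intro allI impI)
  fix f g assume f: "clin smul f" and g: "clin smul g"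
  show "psum X f g = psum Y f g"
    by (rule cov2r[OF f g]) (use peqD[OF assms f] in simp)
qed

lemma AC43: "peq (flipS S (T4 k c)) (T3 (S c) (S k))"
proof (rule peq_rm2_cancel)
  fix y
  obtain g where y: "y = S g" using S_surj by blast
  have "peq (flipS S (lm g (T4 k c))) (flipS S (lm2 k (T2 g c)))" by (rule peq_flipS[OF MA9])
  then have 1: "peq (rm2 (S g) (flipS S (T4 k c))) (rm1 (S k) (flipS S (T2 g c)))"
    by (simp add: flipS_lm flipS_lm2)
  have 2: "peq (rm1 (S k) (flipS S (T2 g c))) (rm1 (S k) (T1 (S c) (S g)))" by (rule peq_rm1[OF AC])
  have 3: "peq (rm2 (S g) (T3 (S c) (S k))) (rm1 (S k) (T1 (S c) (S g)))" by (rule MA10)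
  show "peq (rm2 y (flipS S (T4 k c))) (rm2 y (T3 (S c) (S k)))"
    unfolding y by (rule peq_via[OF peq_trans[OF 1 2] 3])
qed

definition psi where "psi = phi \<circ> S"
lemma clin_psi: "clin smul psi" unfolding psi_def o_def by (rule clin_S[OF clin_phi])

lemma li_T3: "slice2 smul phi (T3 a c) = smul (phi a) c"
  using li T3_in[of a c] unfolding left_integral_def by blast

lemma RI2: "slice1 smul psi (T4 k c) = smul (psi c) k"
proof (rule S_inj, rule ext_clin)
  fix h :: "'a \<Rightarrow> complex" assume h: "clin smul h"
  have "h (S (slice1 smul psi (T4 k c))) = psum (T4 k c) psi (\<lambda>y. h (S y))"
    by (rule clin_slice1[OF clin_S[OF h]])
  also have "\<dots> = psum (flipS S (T4 k c)) h phi" by (simp add: psi_def o_def)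
  also have "\<dots> = psum (T3 (S c) (S k)) h phi" by (rule peqD[OF AC43 h clin_phi])
  also have "\<dots> = h (slice2 smul phi (T3 (S c) (S k)))" by (rule clin_slice2[OF h, symmetric])
  also have "\<dots> = h (S (smul (psi c) k))" by (simp add: li_T3 S_smul psi_def)
  finally show "h (S (slice1 smul psi (T4 k c))) = h (S (smul (psi c) k))" .
qed

lemma RI1: "slice1 smul psi (T1 c k) = smul (psi c) k"
proof (rule eq_lmul, rule ext_clin)
  fix h and q :: "'a \<Rightarrow> complex" assume q: "clin smul q"
  have "q (h * slice1 smul psi (T1 c k)) = psum (T1 c k) psi (\<lambda>y. q (h * y))"
    by (rule clin_slice1[OF clin_lmul[OF q]])
  also have "\<dots> = psum (lm2 h (T1 c k)) psi q" by simp
  also have "\<dots> = psum (rm2 k (T4 h c)) psi q" by (rule peqD[OF MA6 clin_psi q])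
  also have "\<dots> = psum (T4 h c) psi (\<lambda>y. q (y * k))" by simp
  also have "\<dots> = q (slice1 smul psi (T4 h c) * k)" by (rule clin_slice1[OF clin_rmul[OF q], symmetric])
  also have "\<dots> = q (h * smul (psi c) k)" by (simp add: RI2 smul_mult1[symmetric] smul_mult2[symmetric])
  finally show "q (h * slice1 smul psi (T1 c k)) = q (h * smul (psi c) k)" .
qed

lemma G3a: "S (slice1 smul psi (T2 b a)) = E (S a) (S b)"
proof (rule ext_clin)
  fix h :: "'a \<Rightarrow> complex" assume h: "clin smul h"
  have "h (S (slice1 smul psi (T2 b a))) = psum (T2 b a) psi (\<lambda>y. h (S y))"
    by (rule clin_slice1[OF clin_S[OF h]])
  also have "\<dots> = psum (flipS S (T2 b a)) h phi" by (simp add: psi_def o_def)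
  also have "\<dots> = psum (T1 (S a) (S b)) h phi" by (rule peqD[OF AC h clin_phi])
  also have "\<dots> = h (E (S a) (S b))" unfolding E_def by (rule clin_slice2[OF h, symmetric])
  finally show "h (S (slice1 smul psi (T2 b a))) = h (E (S a) (S b))" .
qed

lemma G3b: "slice1 smul psi (T3 b a) = E (S a) (S b)"
proof (rule eq_lmul, rule S_inj, rule ext_clin)
  fix h and q :: "'a \<Rightarrow> complex" assume q: "clin smul q"
  have "q (S (h * slice1 smul psi (T3 b a))) = psum (T3 b a) psi (\<lambda>y. q (S (h * y)))"
    by (rule clin_slice1[OF clin_lmul[OF clin_S[OF q]]])
  also have "\<dots> = psum (lm2 h (T3 b a)) psi (\<lambda>y. q (S y))" by simp
  also have "\<dots> = psum (rm1 a (T4 h b)) psi (\<lambda>y. q (S y))" by (rule peqD[OF MA7 clin_psi clin_S[OF q]])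
  also have "\<dots> = psum (T4 h b) (\<lambda>x. phi (S a * S x)) (\<lambda>y. q (S y))" by (simp add: psi_def S_mult)
  also have "\<dots> = psum (flipS S (T4 h b)) q (\<lambda>z. phi (S a * z))" by simp
  also have "\<dots> = psum (T3 (S b) (S h)) q (\<lambda>z. phi (S a * z))"
    by (rule peqD[OF AC43 q clin_lmul[OF clin_phi]])
  also have "\<dots> = psum (lm2 (S a) (T3 (S b) (S h))) q phi" by simp
  also have "\<dots> = psum (rm1 (S h) (T4 (S a) (S b))) q phi" by (rule peqD[OF MA7 q clin_phi])
  also have "\<dots> = psum (T4 (S a) (S b)) (\<lambda>x. q (x * S h)) phi" by simp
  also have "\<dots> = q (F (S a) (S b) * S h)" unfolding F_def by (rule clin_slice2[OF clin_rmul[OF q], symmetric])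
  also have "\<dots> = q (S (h * E (S a) (S b)))" by (simp add: S_mult SE)
  finally show "q (S (h * slice1 smul psi (T3 b a))) = q (S (h * E (S a) (S b)))" .
qed

lemma inAA_peq: assumes "inAA smul m t" "inAA smul m t'" shows "peq t t'"
proof (rule pcovr)
  fix w1 w2
  have "teq2 smul (fst m [(w1, w2)]) (rmul w1 w2 t)" using inAA_fst[OF assms(1), where y="[(w1, w2)]"] by simp
  moreover have "teq2 smul (fst m [(w1, w2)]) (rmul w1 w2 t')" using inAA_fst[OF assms(2), where y="[(w1, w2)]"] by simp
  ultimately show "peq (rmul w1 w2 t) (rmul w1 w2 t')"
    by (rule peq_via0[OF peq_sym[OF teq2_peq] peq_sym[OF teq2_peq]])
qed

lemma slice1_peq: "peq t t' \<Longrightarrow> clin smul f \<Longrightarrow> slice1 smul f t = slice1 smul f t'"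
  by (rule ext_clin) (simp add: clin_slice1 peq_def)

end

context aqh begin

lemma S_zero: "S 0 = 0"
  using S_smul[of 0 0] by simp

lemma main: "right_integral smul Delta (phi \<circ> S) \<and> faithful (phi \<circ> S) \<and>
    (\<forall>a b t u. inAA smul (mmul (lone b) (Delta a)) t \<and> inAA smul (mmul (Delta b) (lone a)) u \<longrightarrow>
       S (slice1 smul (phi \<circ> S) t) = slice1 smul (phi \<circ> S) u)"
proof (intro conjI allI impI)
  have nz: "psi \<noteq> (\<lambda>_. 0)"
  proof
    assume z: "psi = (\<lambda>_. 0)"
    have "phi x = 0" for x
    proof -
      obtain y where "x = S y" using S_surj by blast
      then show ?thesis using z by (simp add: psi_def fun_eq_iff)
    qed
    then show False using phi_nz by auto
  qed
  show "right_integral smul Delta (phi \<circ> S)"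
    unfolding right_integral_def psi_def[symmetric]
  proof (intro conjI allI impI)
    show "clin smul psi" by (rule clin_psi)
    show "psi \<noteq> (\<lambda>_. 0)" by (rule nz)
    fix a c t
    {
      assume "inAA smul (mmul (Delta a) (rone c)) t"
      then have "peq t (T1 a c)" using T1_in by (rule inAA_peq)
      then show "slice1 smul psi t = smul (psi a) c" by (simp add: slice1_peq[OF _ clin_psi] RI1)
    }
    {
      assume "inAA smul (mmul (rone c) (Delta a)) t"
      then have "peq t (T4 c a)" using T4_in by (rule inAA_peq)
      then show "slice1 smul psi t = smul (psi a) c" by (simp add: slice1_peq[OF _ clin_psi] RI2)
    }
  qed
  show "faithful (phi \<circ> S)"
    unfolding faithful_def
  proof (intro conjI allI impI)
    fix a assume H: "\<forall>b. (phi \<circ> S) (a * b) = 0"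
    have "\<forall>b'. phi (b' * S a) = 0"
    proof
      fix b' obtain b where "b' = S b" using S_surj by blast
      then show "phi (b' * S a) = 0" using H by (simp add: S_mult)
    qed
    then have "S a = S 0" using fa unfolding faithful_def by (simp add: S_zero)
    then show "a = 0" by (rule S_inj)
  next
    fix a assume H: "\<forall>b. (phi \<circ> S) (b * a) = 0"
    have "\<forall>b'. phi (S a * b') = 0"
    proof
      fix b' obtain b where "b' = S b" using S_surj by blast
      then show "phi (S a * b') = 0" using H by (simp add: S_mult)
    qed
    then have "S a = S 0" using fa unfolding faithful_def by (simp add: S_zero)
    then show "a = 0" by (rule S_inj)
  qed
  fix a b t u
  assume H: "inAA smul (mmul (lone b) (Delta a)) t \<and> inAA smul (mmul (Delta b) (lone a)) u"
  have 1: "peq t (T2 b a)" using H T2_in by (blast intro: inAA_peq)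
  have 2: "peq u (T3 b a)" using H T3_in by (blast intro: inAA_peq)
  show "S (slice1 smul (phi \<circ> S) t) = slice1 smul (phi \<circ> S) u"
    unfolding psi_def[symmetric]
    by (simp add: slice1_peq[OF 1 clin_psi] slice1_peq[OF 2 clin_psi] G3a G3b)
qed

end

theorem proposition2p2:
  fixes smul :: "complex \<Rightarrow> 'a::ring \<Rightarrow> 'a"
    and Delta :: "'a \<Rightarrow> 'a t2 mult"
    and phi :: "'a \<Rightarrow> complex"
    and S :: "'a \<Rightarrow> 'a"
  assumes "alg_quantum_hypergroup smul Delta phi S"
  shows "right_integral smul Delta (phi \<circ> S) \<and> faithful (phi \<circ> S) \<and>
    (\<forall>a b t u. inAA smul (mmul (lone b) (Delta a)) t \<and> inAA smul (mmul (Delta b) (lone a)) u \<longrightarrow>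
       S (slice1 smul (phi \<circ> S) t) = slice1 smul (phi \<circ> S) u)"
proof -
  from assms obtain eps where "counit smul Delta eps" "calg smul" "regular_comult smul Delta"
    "left_integral smul Delta phi" "faithful phi" "antipode smul Delta phi S"
    unfolding alg_quantum_hypergroup_def by blast
  then interpret aqh smul Delta phi S eps by unfold_locales
  show ?thesis by (rule main)
qed

end
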